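(* Let $G$ and $H$ be Left dead-ends. Then $G\geq H$ if and only if $o(G^\circ+H)\leq\mathscr{P}$.
   Context: Games are finite partizan games; $\cong$ is identity of game trees; $o(G)$ is the misère outcome class (ordered $\mathscr{L}>\mathscr{N}>\mathscr{R}$, $\mathscr{L}>\mathscr{P}>\mathscr{R}$, with $\mathscr{N},\mathscr{P}$ incomparable). A universe is a set of games closed under options, disjunctive sums, conjugates, and forming $\{\mathscr{G}^L\mid\mathscr{G}^R\}$ from nonempty finite subsets of it; $G\geq_\mathcal{U}H$ means $o(G+X)\geq o(H+X)$ for all $X\in\mathcal{U}$. A Left dead-end is a game all of whose subpositions have no Left option. For Left dead-ends, $G\geq H$ means $G\geq_\mathcal{U}H$ for every universe $\mathcal{U}$. For a Left dead-end $G$, the adjoint is $G^\circ=*=\{0\mid0\}$ if $G\cong0$ and $G^\circ=\{(G^R)^\circ\mid 0\}$ otherwise, with $G^R$ ranging over the Right options of $G$. *)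

theory Defs
  imports "HOL-Library.FSet"
begin

text \<open>Finite partizan games as game trees: a game is given by its finite set of
Left options and its finite set of Right options.  Equality of this datatype is
identity of game trees.\<close>

datatype game = Game (lefts: "game fset") (rights: "game fset")

definition zero :: game where "zero = Game {||} {||}"

definition star :: game where "star = Game {|zero|} {|zero|}"

primrec conj :: "game \<Rightarrow> game" where
  "conj (Game L R) = Game (conj |`| R) (conj |`| L)"

text \<open>Disjunctive sum, defined by an outer recursion on the first summand and an
inner recursion on the second one.  sum_aux FL FR H receives the functions
(GL + _) for GL in the Left options (FL) and Right options (FR) of G and computes G + H.\<close>
primrec sum_aux :: "(game \<Rightarrow> game) fset \<Rightarrow> (game \<Rightarrow> game) fset \<Rightarrow> game \<Rightarrow> game" where
  "sum_aux FL FR (Game HL HR) =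
     Game ((\<lambda>f. f (Game HL HR)) |`| FL |\<union>| sum_aux FL FR |`| HL)
          ((\<lambda>f. f (Game HL HR)) |`| FR |\<union>| sum_aux FL FR |`| HR)"

primrec gsum :: "game \<Rightarrow> game \<Rightarrow> game" where
  "gsum (Game GL GR) = sum_aux (gsum |`| GL) (gsum |`| GR)"

lemma gsum_simp:
  "gsum (Game GL GR) (Game HL HR) =
     Game ((\<lambda>g. gsum g (Game HL HR)) |`| GL |\<union>| (\<lambda>h. gsum (Game GL GR) h) |`| HL)
          ((\<lambda>g. gsum g (Game HL HR)) |`| GR |\<union>| (\<lambda>h. gsum (Game GL GR) h) |`| HR)"
  by (simp add: fset.map_comp o_def)

text \<open>Misere play: a player who cannot move wins.
win G = (Left wins moving first in G, Right wins moving first in G).\<close>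
primrec win :: "game \<Rightarrow> bool \<times> bool" where
  "win (Game L R) =
     (L = {||} \<or> (\<exists>p \<in> fset (win |`| L). \<not> snd p),
      R = {||} \<or> (\<exists>p \<in> fset (win |`| R). \<not> fst p))"

datatype outcome = oL | oN | oP | oR

definition outc :: "game \<Rightarrow> outcome" where
  "outc G = (case win G of
      (True, True) \<Rightarrow> oN
    | (True, False) \<Rightarrow> oL
    | (False, True) \<Rightarrow> oR
    | (False, False) \<Rightarrow> oP)"

definition outcome_le :: "outcome \<Rightarrow> outcome \<Rightarrow> bool" where
  "outcome_le x y \<longleftrightarrow> x = y \<or> x = oR \<or> y = oL"

inductive_set subpositions :: "game \<Rightarrow> game set" for G where
  self: "G \<in> subpositions G"
| left: "K \<in> subpositions G \<Longrightarrow> K' |\<in>| lefts K \<Longrightarrow> K' \<in> subpositions G"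
| right: "K \<in> subpositions G \<Longrightarrow> K' |\<in>| rights K \<Longrightarrow> K' \<in> subpositions G"

definition left_dead_end :: "game \<Rightarrow> bool" where
  "left_dead_end G \<longleftrightarrow> (\<forall>K \<in> subpositions G. lefts K = {||})"

definition universe :: "game set \<Rightarrow> bool" where
  "universe U \<longleftrightarrow>
     (\<forall>G \<in> U. fset (lefts G) \<subseteq> U \<and> fset (rights G) \<subseteq> U) \<and>
     (\<forall>G \<in> U. \<forall>H \<in> U. gsum G H \<in> U) \<and>
     (\<forall>G \<in> U. conj G \<in> U) \<and>
     (\<forall>A B. A \<noteq> {||} \<longrightarrow> B \<noteq> {||} \<longrightarrow> fset A \<subseteq> U \<longrightarrow> fset B \<subseteq> U \<longrightarrow> Game A B \<in> U)"

definition ge_in :: "game set \<Rightarrow> game \<Rightarrow> game \<Rightarrow> bool" where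
  "ge_in U G H \<longleftrightarrow> (\<forall>X \<in> U. outcome_le (outc (gsum H X)) (outc (gsum G X)))"

text \<open>For Left dead-ends: G \<ge> H iff G \<ge>_U H for every universe U.\<close>
definition dead_end_ge :: "game \<Rightarrow> game \<Rightarrow> bool" where
  "dead_end_ge G H \<longleftrightarrow> (\<forall>U. universe U \<longrightarrow> ge_in U G H)"

primrec adjoint :: "game \<Rightarrow> game" where
  "adjoint (Game L R) =
     (if Game L R = zero then star else Game (adjoint |`| R) {|zero|})"

end

theory Submission
  imports Defs
begin

abbreviation LW :: "game \<Rightarrow> bool" where "LW G \<equiv> fst (win G)"
abbreviation RW :: "game \<Rightarrow> bool" where "RW G \<equiv> snd (win G)"

lemma LW_eq: "LW G \<longleftrightarrow> lefts G = {||} \<or> (\<exists>g. g |\<in>| lefts G \<and> \<not> RW g)"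
  by (cases G) auto

lemma RW_eq: "RW G \<longleftrightarrow> rights G = {||} \<or> (\<exists>g. g |\<in>| rights G \<and> \<not> LW g)"
  by (cases G) auto

lemma gsum_lefts: "lefts (gsum G H) = (\<lambda>g. gsum g H) |`| lefts G |\<union>| (\<lambda>h. gsum G h) |`| lefts H"
  by (cases G; cases H) (simp only: gsum_simp game.sel)

lemma gsum_rights: "rights (gsum G H) = (\<lambda>g. gsum g H) |`| rights G |\<union>| (\<lambda>h. gsum G h) |`| rights H"
  by (cases G; cases H) (simp only: gsum_simp game.sel)

lemma LW_gsum: "LW (gsum G H) \<longleftrightarrow> (lefts G = {||} \<and> lefts H = {||})
   \<or> (\<exists>g. g |\<in>| lefts G \<and> \<not> RW (gsum g H)) \<or> (\<exists>h. h |\<in>| lefts H \<and> \<not> RW (gsum G h))"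
  unfolding LW_eq[of "gsum G H"] gsum_lefts by auto

lemma RW_gsum: "RW (gsum G H) \<longleftrightarrow> (rights G = {||} \<and> rights H = {||})
   \<or> (\<exists>g. g |\<in>| rights G \<and> \<not> LW (gsum g H)) \<or> (\<exists>h. h |\<in>| rights H \<and> \<not> LW (gsum G h))"
  unfolding RW_eq[of "gsum G H"] gsum_rights by auto

lemma gsum_zero: "gsum zero H = H"
proof (induction H)
  case (Game HL HR)
  have "gsum zero (Game HL HR) = Game ((\<lambda>h. gsum zero h) |`| HL) ((\<lambda>h. gsum zero h) |`| HR)"
    unfolding zero_def gsum_simp by simp
  also have "\<dots> = Game HL HR" using Game by (simp add: fset.map_ident_strong)
  finally show ?case .
qed

lemma gsum_comm: "gsum G H = gsum H G"
proof (induction G arbitrary: H)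
  case (Game GL GR)
  note IHG = Game
  show ?case
  proof (induction H)
    case (Game HL HR)
    have a: "(\<lambda>g. gsum g (Game HL HR)) |`| GL = (\<lambda>g. gsum (Game HL HR) g) |`| GL"
      using IHG(1) by (intro fset.map_cong0) (auto simp del: gsum.simps)
    have b: "(\<lambda>g. gsum g (Game HL HR)) |`| GR = (\<lambda>g. gsum (Game HL HR) g) |`| GR"
      using IHG(2) by (intro fset.map_cong0) (auto simp del: gsum.simps)
    have c: "(\<lambda>h. gsum (Game GL GR) h) |`| HL = (\<lambda>h. gsum h (Game GL GR)) |`| HL"
      using Game(1) by (intro fset.map_cong0) (auto simp del: gsum.simps)
    have d: "(\<lambda>h. gsum (Game GL GR) h) |`| HR = (\<lambda>h. gsum h (Game GL GR)) |`| HR"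
      using Game(2) by (intro fset.map_cong0) (auto simp del: gsum.simps)
    show ?case unfolding gsum_simp a b c d by (simp add: funion_commute)
  qed
qed

lemma sub_trans: "K \<in> subpositions G \<Longrightarrow> G \<in> subpositions J \<Longrightarrow> K \<in> subpositions J"
  by (induction rule: subpositions.induct) (auto intro: subpositions.intros)

lemma lde_lefts: "left_dead_end G \<Longrightarrow> lefts G = {||}"
  unfolding left_dead_end_def using subpositions.self by blast

lemma lde_right: "left_dead_end G \<Longrightarrow> g |\<in>| rights G \<Longrightarrow> left_dead_end g"
  unfolding left_dead_end_def
  by (meson sub_trans subpositions.right subpositions.self)

lemma lde_LW: "left_dead_end G \<Longrightarrow> LW G"
  using lde_lefts LW_eq by blast

lemma rights_adjoint: "rights (adjoint G) = {|zero|}"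
  by (cases G) (simp add: star_def)

lemma lde_adjoint:
  assumes "left_dead_end G"
  shows "adjoint G = (if rights G = {||} then star else Game (adjoint |`| rights G) {|zero|})"
proof (cases G)
  case (Game L R)
  then have "L = {||}" using lde_lefts[OF assms] by simp
  then show ?thesis using Game by (auto simp: zero_def)
qed

definition PP :: "game \<Rightarrow> game \<Rightarrow> bool" where
  "PP G H \<longleftrightarrow> left_dead_end G \<and> left_dead_end H \<and> \<not> LW (gsum (adjoint G) H)"

lemma LW_star: "lefts H = {||} \<Longrightarrow> LW (gsum star H) \<longleftrightarrow> \<not> RW H"
  unfolding LW_gsum star_def by (simp add: gsum_zero del: gsum.simps)

lemma PP_zero:
  assumes "PP G H" "rights G = {||}"
  shows "G = H"
proof -
  have G: "left_dead_end G" "left_dead_end H" "\<not> LW (gsum (adjoint G) H)"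
    using assms(1) unfolding PP_def by auto
  have "adjoint G = star" using lde_adjoint[OF G(1)] assms(2) by simp
  then have "RW H" using G(3) LW_star lde_lefts[OF G(2)] by simp
  then have "rights H = {||}" using RW_eq lde_LW lde_right G(2) by blast
  then show ?thesis using assms(2) lde_lefts G by (metis game.collapse)
qed

lemma PP_step:
  assumes "PP G H" "g |\<in>| rights G"
  shows "\<exists>h. h |\<in>| rights H \<and> PP g h"
proof -
  have G: "left_dead_end G" "left_dead_end H" "\<not> LW (gsum (adjoint G) H)"
    using assms(1) unfolding PP_def by auto
  have "rights G \<noteq> {||}" using assms(2) by auto
  then have A: "adjoint G = Game (adjoint |`| rights G) {|zero|}" using lde_adjoint[OF G(1)] by simp
  have "RW (gsum (adjoint g) H)" using G(3) assms(2) unfolding LW_gsum A by auto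
  then obtain h where "h |\<in>| rights H" "\<not> LW (gsum (adjoint g) h)"
    unfolding RW_gsum rights_adjoint using gsum_zero lde_LW G(2) by auto
  then show ?thesis using lde_right G(1,2) assms(2) unfolding PP_def by blast
qed

lemma PP_refl: "left_dead_end G \<Longrightarrow> PP G G"
proof (induction G)
  case (Game L R)
  show ?case
  proof (cases "R = {||}")
    case True
    then have "adjoint (Game L R) = star" using lde_adjoint[OF Game(3)] by simp
    moreover have "RW (Game L R)" using True by simp
    ultimately show ?thesis using LW_star lde_lefts[OF Game(3)] Game(3) unfolding PP_def by simp
  next
    case False
    then have A: "adjoint (Game L R) = Game (adjoint |`| R) {|zero|}" using lde_adjoint[OF Game(3)] by simp
    have "RW (gsum (adjoint r) (Game L R))" if r: "r |\<in>| R" for r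
    proof -
      have "PP r r" using Game(2)[of r] r lde_right[OF Game(3)] by auto
      then show ?thesis unfolding RW_gsum PP_def using r by auto
    qed
    then have "\<not> LW (gsum (adjoint (Game L R)) (Game L R))"
      unfolding LW_gsum A using lde_lefts[OF Game(3)] False by auto
    then show ?thesis using Game(3) unfolding PP_def by simp
  qed
qed

definition QQ :: "game \<Rightarrow> game \<Rightarrow> game \<Rightarrow> bool" where
  "QQ G H X \<longleftrightarrow> (LW (gsum H X) \<longrightarrow> LW (gsum G X)) \<and> (RW (gsum G X) \<longrightarrow> RW (gsum H X))"

lemma key: "\<forall>G H. PP G H \<longrightarrow> QQ G H X"
proof (induction X)
  case (Game XL XR)
  note IHX = Game
  have "\<And>H. PP G H \<Longrightarrow> QQ G H (Game XL XR)" for G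
  proof (induction G)
    case (Game GL GR)
    have G: "left_dead_end (Game GL GR)" "left_dead_end H"
      using Game(3) unfolding PP_def by auto
    have lG: "GL = {||}" using lde_lefts[OF G(1)] by simp
    have lH: "lefts H = {||}" using lde_lefts[OF G(2)] by simp
    have 1: "LW (gsum (Game GL GR) (Game XL XR))" if a: "LW (gsum H (Game XL XR))"
    proof -
      from a lH have "XL = {||} \<or> (\<exists>x. x |\<in>| XL \<and> \<not> RW (gsum H x))"
        unfolding LW_gsum by auto
      then show ?thesis
      proof
        assume "XL = {||}" then show ?thesis unfolding LW_gsum using lG by simp
      next
        assume "\<exists>x. x |\<in>| XL \<and> \<not> RW (gsum H x)"
        then obtain x where x: "x |\<in>| XL" "\<not> RW (gsum H x)" by blast
        have "QQ (Game GL GR) H x" using IHX(1)[of x] x(1) Game(3) by auto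
        then have "\<not> RW (gsum (Game GL GR) x)" using x(2) unfolding QQ_def by blast
        then show ?thesis unfolding LW_gsum using x(1) by auto
      qed
    qed
    have 2: "RW (gsum H (Game XL XR))" if a: "RW (gsum (Game GL GR) (Game XL XR))"
    proof -
      from a have "(GR = {||} \<and> XR = {||}) \<or> (\<exists>g. g |\<in>| GR \<and> \<not> LW (gsum g (Game XL XR)))
        \<or> (\<exists>x. x |\<in>| XR \<and> \<not> LW (gsum (Game GL GR) x))"
        unfolding RW_gsum by simp
      then show ?thesis
      proof (elim disjE conjE exE)
        assume "GR = {||}" "XR = {||}"
        then have "Game GL GR = H" using PP_zero Game(3) by simp
        then show ?thesis using a by simp
      next
        fix g assume g: "g |\<in>| GR" "\<not> LW (gsum g (Game XL XR))"
        obtain h where h: "h |\<in>| rights H" "PP g h" using PP_step[OF Game(3), of g] g(1) by auto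
        have "QQ g h (Game XL XR)" using Game(2)[of g h] g(1) h(2) by auto
        then have "\<not> LW (gsum h (Game XL XR))" using g(2) unfolding QQ_def by blast
        then show ?thesis unfolding RW_gsum using h(1) by auto
      next
        fix x assume x: "x |\<in>| XR" "\<not> LW (gsum (Game GL GR) x)"
        have "QQ (Game GL GR) H x" using IHX(2)[of x] x(1) Game(3) by auto
        then have "\<not> LW (gsum H x)" using x(2) unfolding QQ_def by blast
        then show ?thesis unfolding RW_gsum using x(1) by auto
      qed
    qed
    show ?case unfolding QQ_def using 1 2 by blast
  qed
  then show ?case by blast
qed

lemma outcome_le_win: "outcome_le (outc A) (outc B) \<longleftrightarrow> (LW A \<longrightarrow> LW B) \<and> (RW B \<longrightarrow> RW A)"
  unfolding outcome_le_def outc_def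
  by (cases "win A"; cases "win B") (auto split: bool.splits)

lemma universe_UNIV: "universe UNIV"
  unfolding universe_def by simp

theorem mainTheorem16:
  assumes "left_dead_end G" and "left_dead_end H"
  shows "dead_end_ge G H \<longleftrightarrow> outcome_le (outc (gsum (adjoint G) H)) oP"
proof -
  have oP: "outcome_le (outc A) oP \<longleftrightarrow> \<not> LW A" for A
    unfolding outcome_le_def outc_def by (cases "win A") (auto split: bool.splits)
  show ?thesis
  proof
    assume "dead_end_ge G H"
    then have "ge_in UNIV G H" using universe_UNIV unfolding dead_end_ge_def by blast
    then have "outcome_le (outc (gsum H (adjoint G))) (outc (gsum G (adjoint G)))"
      unfolding ge_in_def by blast
    moreover have "\<not> LW (gsum G (adjoint G))"
      using PP_refl[OF assms(1)] gsum_comm unfolding PP_def by metis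
    ultimately have "\<not> LW (gsum H (adjoint G))" unfolding outcome_le_win by blast
    then show "outcome_le (outc (gsum (adjoint G) H)) oP" using oP gsum_comm by metis
  next
    assume "outcome_le (outc (gsum (adjoint G) H)) oP"
    then have "PP G H" using oP assms unfolding PP_def by blast
    then have "QQ G H X" for X using key by blast
    then show "dead_end_ge G H"
      unfolding dead_end_ge_def ge_in_def outcome_le_win QQ_def by blast
  qed
qed

end
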